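(* Let $n\ge2$, $\lambda_0\in\mathbb D\setminus\{0\}$ and $y^0\in\widetilde{\mathbb G}_n$. Then there exists an analytic $\psi:\mathbb D\to\widetilde\Gamma_n$ with $\psi(0)=(0,\dots,0)$ and $\psi(\lambda_0)=y^0$ if and only if there exists an analytic $\psi:\mathbb D\to\widetilde{\mathbb G}_n$ with $\psi(0)=(0,\dots,0)$ and $\psi(\lambda_0)=y^0$.
   Context: $\mathbb D$ is the open unit disc. $\widetilde{\mathbb G}_n=\{(y_1,\dots,y_{n-1},q)\in\mathbb C^n: q\in\mathbb D,\ y_j=\beta_j+\bar\beta_{n-j}q$ for some $\beta_j\in\mathbb C$ with $|\beta_j|+|\beta_{n-j}|<\binom{n}{j}$, $j=1,\dots,n-1\}$; $\widetilde\Gamma_n$ is its closure. *)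

theory Defs
  imports "HOL-Analysis.Analysis"
begin

text \<open>A point (y_1,...,y_{n-1},q) of C^n is encoded as z :: nat => complex with
  z j = y_j for 1 <= j <= n-1, z n = q, and z k = 0 for k = 0 or k > n.\<close>

definition tG :: "nat \<Rightarrow> (nat \<Rightarrow> complex) set" where
  "tG n = {z. (\<forall>k. (k = 0 \<or> k > n) \<longrightarrow> z k = 0) \<and> z n \<in> ball 0 1 \<and>
     (\<exists>\<beta> :: nat \<Rightarrow> complex. \<forall>j\<in>{1..n-1}.
        z j = \<beta> j + cnj (\<beta> (n - j)) * z n \<and>
        cmod (\<beta> j) + cmod (\<beta> (n - j)) < real (n choose j))}"

text \<open>Closure in the product topology on nat => complex; since all points of tG n
  vanish outside {1..n}, this is the Euclidean closure in C^n (zero-padded).\<close>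
definition tGamma :: "nat \<Rightarrow> (nat \<Rightarrow> complex) set" where
  "tGamma n = closure (tG n)"

definition analytic_into :: "(complex \<Rightarrow> (nat \<Rightarrow> complex)) \<Rightarrow> complex set \<Rightarrow> nat \<Rightarrow> bool" where
  "analytic_into \<psi> S n \<longleftrightarrow> (\<forall>k\<in>{1..n}. (\<lambda>w. \<psi> w k) holomorphic_on S)"

end

theory Submission
  imports Defs "HOL-Complex_Analysis.Complex_Analysis"
begin

lemma schwarz_le:
  assumes hol: "f holomorphic_on ball 0 1" and f0: "f 0 = 0"
    and le: "\<And>z. z \<in> ball 0 1 \<Longrightarrow> cmod (f z) \<le> 1" and xi: "\<xi> \<in> ball 0 1"
  shows "cmod (f \<xi>) < 1"
proof -
  have "cmod (f \<xi>) \<le> cmod \<xi>"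
  proof (rule field_le_mult_one_interval)
    fix r :: real assume r: "0 < r" "r < 1"
    have "cmod ((\<lambda>w. of_real r * f w) \<xi>) \<le> cmod \<xi>"
    proof (rule Schwarz_Lemma(1))
      show "(\<lambda>w. of_real r * f w) holomorphic_on ball 0 1" using hol by (intro holomorphic_intros)
      show "of_real r * f 0 = 0" using f0 by simp
      show "cmod (of_real r * f z) < 1" if "cmod z < 1" for z
      proof -
        have "cmod (f z) \<le> 1" using le that by simp
        then have "r * cmod (f z) < 1" using r
          by (metis less_le_trans mult_left_le mult_le_one less_eq_real_def mult.commute norm_ge_zero)
        then show ?thesis using r by (simp add: norm_mult)
      qed
      show "cmod \<xi> < 1" using xi by simp
    qed
    then show "r * cmod (f \<xi>) \<le> cmod \<xi>" using r by (simp add: norm_mult)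
  qed
  then show ?thesis using xi by simp
qed

lemma ident:
  fixes z s p :: complex
  assumes "cmod z = 1"
  shows "(cmod (2 - z * s))^2 - (cmod (2 * z * p - s))^2 = 4 * (1 - (cmod p)^2) - 4 * Re (z * (s - p * cnj s))"
proof -
  have h: "(Re z)^2 + (Im z)^2 = 1" using assms by (simp add: cmod_def)
  show ?thesis unfolding cmod_power2 using h
    by (simp add: algebra_simps power2_eq_square) algebra
qed


lemma coord_cont [continuous_intros]: "continuous (at x) (\<lambda>y::nat\<Rightarrow>complex. y k)"
  by (metis continuous_on_product_coordinates continuous_on_eq_continuous_at open_UNIV UNIV_I)

lemma mcnj: "w * cnj w = of_real (cmod w) * of_real (cmod w)"
  by (metis complex_norm_square power2_eq_square of_real_mult)

lemma closure_pt:
  assumes "x \<in> closure S" "continuous (at x) f" "\<And>y. y \<in> S \<Longrightarrow> f y \<in> T" "closed T"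
  shows "f x \<in> T"
proof (cases "x \<in> S")
  case True then show ?thesis using assms by auto
next
  case False
  then have lp: "x islimpt S" using assms(1) by (auto simp: closure_def)
  show ?thesis
  proof (rule Lim_in_closed_set[OF assms(4)])
    show "eventually (\<lambda>y. f y \<in> T) (at x within S)"
      using assms(3) by (auto simp: eventually_at_filter)
    show "at x within S \<noteq> bot" using lp by (simp add: trivial_limit_within)
    show "(f \<longlongrightarrow> f x) (at x within S)"
      using assms(2) continuous_at_imp_continuous_within continuous_within by blast
  qed
qed

lemma unit_max:
  fixes w :: complex
  assumes "\<And>z. cmod z = 1 \<Longrightarrow> Re (z * w) < c"
  shows "cmod w < c"
proof (cases "w = 0")
  case True then show ?thesis using assms[of 1] by simp
next
  case False
  define z where "z = cnj w / of_real (cmod w)"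
  have "cmod z = 1" using False by (simp add: z_def norm_divide)
  moreover have "z * w = of_real (cmod w)" using False
    by (simp add: z_def mcnj field_simps power2_eq_square)
  ultimately show ?thesis using assms[of z] by simp
qed

lemma sum_max:
  fixes a b :: complex
  assumes "\<And>\<omega>. cmod \<omega> = 1 \<Longrightarrow> cmod (a + \<omega> * b) < c"
  shows "cmod a + cmod b < c"
proof (cases "a = 0 \<or> b = 0")
  case True then show ?thesis using assms[of 1] by auto
next
  case False
  define \<omega> where "\<omega> = (a / of_real (cmod a)) * (cnj b / of_real (cmod b))"
  have "cmod \<omega> = 1" using False by (simp add: \<omega>_def norm_divide norm_mult)
  moreover have "\<omega> * b = a * of_real (cmod b / cmod a)" using False
    by (simp add: \<omega>_def mcnj field_simps power2_eq_square)
  moreover have "cmod (a + a * of_real (cmod b / cmod a)) = cmod a + cmod b"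
  proof -
    have "a + a * of_real (cmod b / cmod a) = a * of_real (1 + cmod b / cmod a)" by (simp add: algebra_simps)
    moreover have "cmod (a * of_real (1 + cmod b / cmod a)) = cmod a * (1 + cmod b / cmod a)"
      by (simp only: norm_mult norm_of_real) (simp add: abs_of_nonneg)
    moreover have "cmod a * (1 + cmod b / cmod a) = cmod a + cmod b" using False
      by (simp add: field_simps)
    ultimately show ?thesis by simp
  qed
  ultimately show ?thesis using assms[of \<omega>] by simp
qed


lemma sq_to_norm:
  fixes a b :: complex
  assumes "(cmod b)^2 - (cmod a)^2 > 0"
  shows "cmod a < cmod b"
  using assms by (smt (verit) norm_ge_zero power_mono)

lemma tG_point:
  assumes y: "y \<in> tG n" and j: "j \<in> {1..n-1}" and w: "cmod \<omega> = 1" and z: "cmod z = 1"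
  defines "s \<equiv> (y j + \<omega> * y (n-j)) / of_nat (n choose j)" and "p \<equiv> \<omega> * y n"
  shows "cmod s < 2 \<and> cmod (2 * z * p - s) < cmod (2 - z * s)"
proof -
  obtain \<beta> where yn: "cmod (y n) < 1" and hb: "\<forall>j\<in>{1..n-1}. y j = \<beta> j + cnj (\<beta> (n - j)) * y n \<and>
        cmod (\<beta> j) + cmod (\<beta> (n - j)) < real (n choose j)"
    using y unfolding tG_def by auto
  have j2: "n - j \<in> {1..n-1}" and nnj: "n - (n-j) = j" using j by auto
  have e1: "y j = \<beta> j + cnj (\<beta> (n - j)) * y n" and bd: "cmod (\<beta> j) + cmod (\<beta> (n - j)) < real (n choose j)"
    using hb j by auto
  have e2: "y (n-j) = \<beta> (n-j) + cnj (\<beta> j) * y n" using hb j2 nnj by metis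
  define C where "C = real (n choose j)"
  have Cpos: "C > 0" using bd unfolding C_def by (smt (verit) norm_ge_zero)
  define \<gamma> where "\<gamma> = (\<beta> j + \<omega> * \<beta> (n-j)) / of_real C"
  have g1: "cmod \<gamma> < 1"
  proof -
    have "cmod (\<beta> j + \<omega> * \<beta> (n-j)) \<le> cmod (\<beta> j) + cmod (\<beta> (n - j))"
      using norm_triangle_ineq[of "\<beta> j" "\<omega> * \<beta> (n-j)"] w by (simp add: norm_mult)
    then show ?thesis using bd Cpos unfolding \<gamma>_def C_def by (simp add: norm_divide divide_simps)
  qed
  have ww: "\<omega> * cnj \<omega> = 1" using w mcnj[of \<omega>] by simp
  have sC: "s = (y j + \<omega> * y (n-j)) / of_real C" unfolding s_def C_def by simp
  have sg: "s = \<gamma> + cnj \<gamma> * p"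
  proof -
    have h: "cnj (\<beta> j + \<omega> * \<beta> (n-j)) * (\<omega> * y n) = \<omega> * cnj (\<beta> j) * y n + (\<omega> * cnj \<omega>) * cnj (\<beta> (n-j)) * y n"
      by (simp add: algebra_simps)
    have "y j + \<omega> * y (n-j) = (\<beta> j + \<omega> * \<beta> (n-j)) + cnj (\<beta> j + \<omega> * \<beta> (n-j)) * (\<omega> * y n)"
      unfolding h ww e1 e2 by (simp add: algebra_simps)
    then show ?thesis unfolding sC \<gamma>_def p_def using Cpos by (simp add: field_simps)
  qed
  have pn: "cmod p < 1" using yn w unfolding p_def by (simp add: norm_mult)
  have s2: "cmod s < 2"
  proof -
    have "cmod s \<le> cmod \<gamma> + cmod \<gamma> * cmod p" unfolding sg
      using norm_triangle_ineq[of \<gamma> "cnj \<gamma> * p"] by (simp add: norm_mult)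
    also have "\<dots> < 2" using g1 pn
      by (smt (verit) mult_le_one norm_ge_zero)
    finally show ?thesis .
  qed
  have sp: "s - p * cnj s = \<gamma> * (1 - of_real ((cmod p)^2))"
  proof -
    have "p * cnj p = of_real ((cmod p)^2)" using mcnj[of p] by (simp add: power2_eq_square)
    then show ?thesis unfolding sg by (simp add: algebra_simps)
  qed
  have "Re (z * \<gamma>) < 1" using complex_Re_le_cmod[of "z * \<gamma>"] g1 z
    by (simp add: norm_mult)
  then have "Re (z * (s - p * cnj s)) < 1 - (cmod p)^2"
  proof -
    have "Re (z * (s - p * cnj s)) = Re (z * \<gamma>) * (1 - (cmod p)^2)" unfolding sp
      by (simp add: mult.assoc[symmetric] del: of_real_power)
    moreover have "1 - (cmod p)^2 > 0" using pn
      by (simp add: abs_square_less_1)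
    ultimately show ?thesis using \<open>Re (z * \<gamma>) < 1\<close> by simp
  qed
  then have "(cmod (2 - z * s))^2 - (cmod (2 * z * p - s))^2 > 0" using ident[OF z, of s p] by simp
  then show ?thesis using s2 sq_to_norm by blast
qed


lemma tGamma_point:
  assumes y: "y \<in> tGamma n"
  shows tGamma_zero: "\<And>k. k = 0 \<or> k > n \<Longrightarrow> y k = 0"
    and tGamma_n: "cmod (y n) \<le> 1"
    and tGamma_s: "\<And>j \<omega> z. j \<in> {1..n-1} \<Longrightarrow> cmod \<omega> = 1 \<Longrightarrow>
            cmod ((y j + \<omega> * y (n-j)) / of_nat (n choose j)) \<le> 2"
    and tGamma_F: "\<And>j \<omega> z. j \<in> {1..n-1} \<Longrightarrow> cmod \<omega> = 1 \<Longrightarrow> cmod z = 1 \<Longrightarrow>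
            cmod ((y j + \<omega> * y (n-j)) / of_nat (n choose j)) < 2 \<Longrightarrow>
            cmod ((2 * z * (\<omega> * y n) - (y j + \<omega> * y (n-j)) / of_nat (n choose j)) /
                  (2 - z * ((y j + \<omega> * y (n-j)) / of_nat (n choose j)))) \<le> 1"
proof -
  have cl: "y \<in> closure (tG n)" using y unfolding tGamma_def .
  show "y k = 0" if "k = 0 \<or> k > n" for k
    using closure_pt[OF cl, of "\<lambda>y. y k" "{0}"] that by (auto intro: continuous_intros simp: tG_def)
  show "cmod (y n) \<le> 1"
  proof -
    have "isCont (\<lambda>y. cmod (y n)) y" by (intro continuous_intros)
    then show ?thesis using closure_pt[OF cl, of "\<lambda>y. cmod (y n)" "{..1}"]
      by (auto simp: tG_def less_imp_le)
  qed
  show "cmod ((y j + \<omega> * y (n-j)) / of_nat (n choose j)) \<le> 2" 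
    if j: "j \<in> {1..n-1}" and w: "cmod \<omega> = 1" for j \<omega>
    using closure_pt[OF cl, of "\<lambda>y. cmod ((y j + \<omega> * y (n-j)) / of_nat (n choose j))" "{..2}"]
      tG_point[OF _ j w, of _ 1]
    by (force intro!: continuous_intros)
  show "cmod ((2 * z * (\<omega> * y n) - (y j + \<omega> * y (n-j)) / of_nat (n choose j)) /
                  (2 - z * ((y j + \<omega> * y (n-j)) / of_nat (n choose j)))) \<le> 1"
    if j: "j \<in> {1..n-1}" and w: "cmod \<omega> = 1" and z: "cmod z = 1"
       and s2: "cmod ((y j + \<omega> * y (n-j)) / of_nat (n choose j)) < 2" for j \<omega> z
  proof -
    have den: "2 - z * ((y j + \<omega> * y (n-j)) / of_nat (n choose j)) \<noteq> 0"
    proof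
      assume "2 - z * ((y j + \<omega> * y (n-j)) / of_nat (n choose j)) = 0"
      then have "z * ((y j + \<omega> * y (n-j)) / of_nat (n choose j)) = 2" by simp
      then have "cmod (z * ((y j + \<omega> * y (n-j)) / of_nat (n choose j))) = 2" by simp
      moreover have "cmod (z * ((y j + \<omega> * y (n-j)) / of_nat (n choose j))) = cmod ((y j + \<omega> * y (n-j)) / of_nat (n choose j))"
        using z by (simp only: norm_mult)
      ultimately show False using s2 by simp
    qed
    have "(\<lambda>y. (2 * z * (\<omega> * y n) - (y j + \<omega> * y (n-j)) / of_nat (n choose j)) /
                  (2 - z * ((y j + \<omega> * y (n-j)) / of_nat (n choose j)))) y \<in> cball 0 1"
    proof (rule closure_pt[OF cl])
      show "continuous (at y) (\<lambda>y. (2 * z * (\<omega> * y n) - (y j + \<omega> * y (n-j)) / of_nat (n choose j)) /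
                  (2 - z * ((y j + \<omega> * y (n-j)) / of_nat (n choose j))))"
        using den j by (intro continuous_intros) auto
      show "closed (cball (0::complex) 1)" by simp
      fix u assume u: "u \<in> tG n"
      have "cmod (2 * z * (\<omega> * u n) - (u j + \<omega> * u (n-j)) / of_nat (n choose j)) <
            cmod (2 - z * ((u j + \<omega> * u (n-j)) / of_nat (n choose j)))"
        using tG_point[OF u j w z] by simp
      then show "(2 * z * (\<omega> * u n) - (u j + \<omega> * u (n-j)) / of_nat (n choose j)) /
                  (2 - z * ((u j + \<omega> * u (n-j)) / of_nat (n choose j))) \<in> cball 0 1"
        by (simp add: norm_divide divide_simps)
    qed
    then show ?thesis by simp
  qed
qed


theorem mainTheorem12:
  fixes n :: nat and l0 :: complex and y0 :: "nat \<Rightarrow> complex"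
  assumes "n \<ge> 2" and "l0 \<in> ball 0 1" and "l0 \<noteq> 0" and "y0 \<in> tG n"
  shows "(\<exists>\<psi>. analytic_into \<psi> (ball 0 1) n \<and> \<psi> ` ball 0 1 \<subseteq> tGamma n \<and>
            \<psi> 0 = (\<lambda>k. 0) \<and> \<psi> l0 = y0)
     \<longleftrightarrow> (\<exists>\<psi>. analytic_into \<psi> (ball 0 1) n \<and> \<psi> ` ball 0 1 \<subseteq> tG n \<and>
            \<psi> 0 = (\<lambda>k. 0) \<and> \<psi> l0 = y0)"
proof
  assume "\<exists>\<psi>. analytic_into \<psi> (ball 0 1) n \<and> \<psi> ` ball 0 1 \<subseteq> tG n \<and> \<psi> 0 = (\<lambda>k. 0) \<and> \<psi> l0 = y0"
  then show "\<exists>\<psi>. analytic_into \<psi> (ball 0 1) n \<and> \<psi> ` ball 0 1 \<subseteq> tGamma n \<and> \<psi> 0 = (\<lambda>k. 0) \<and> \<psi> l0 = y0"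
    unfolding tGamma_def using closure_subset by blast
next
  assume "\<exists>\<psi>. analytic_into \<psi> (ball 0 1) n \<and> \<psi> ` ball 0 1 \<subseteq> tGamma n \<and> \<psi> 0 = (\<lambda>k. 0) \<and> \<psi> l0 = y0"
  then obtain \<psi> where an: "analytic_into \<psi> (ball 0 1) n" and im: "\<psi> ` ball 0 1 \<subseteq> tGamma n"
    and p0: "\<psi> 0 = (\<lambda>k. 0)" and pl: "\<psi> l0 = y0" by blast
  have hol: "\<And>k. k \<in> {1..n} \<Longrightarrow> (\<lambda>w. \<psi> w k) holomorphic_on ball 0 1"
    using an unfolding analytic_into_def by blast
  have Gm: "\<And>w. w \<in> ball 0 1 \<Longrightarrow> \<psi> w \<in> tGamma n" using im by blast
  have "\<psi> ` ball 0 1 \<subseteq> tG n"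
  proof
    fix y assume "y \<in> \<psi> ` ball 0 1"
    then obtain lam where lam: "lam \<in> ball 0 1" and y: "y = \<psi> lam" by blast
    have nn: "n \<in> {1..n}" using assms(1) by simp
    define q where "q = y n"
    have q1: "cmod q < 1" unfolding q_def y
      by (rule schwarz_le[OF hol[OF nn]]) (use p0 tGamma_n[OF Gm] lam in auto)
    have key: "cmod ((y j - q * cnj (y (n-j))) + \<omega> * (y (n-j) - q * cnj (y j)))
                < real (n choose j) * (1 - (cmod q)^2)"
      if j: "j \<in> {1..n-1}" and w: "cmod \<omega> = 1" for j \<omega>
    proof -
      have jj: "j \<in> {1..n}" "n - j \<in> {1..n}" using j by auto
      define S where "S w = (\<psi> w j + \<omega> * \<psi> w (n-j)) / of_nat (n choose j)" for w
      have Shol: "S holomorphic_on ball 0 1"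
        unfolding S_def by (intro holomorphic_intros hol jj) (use j in auto)
      have S0: "S 0 = 0" unfolding S_def p0 by simp
      have S2: "cmod (S w) < 2" if "w \<in> ball 0 1" for w
      proof -
        have "cmod ((\<lambda>w. S w / 2) w) < 1"
        proof (rule schwarz_le[of "\<lambda>w. S w / 2" w])
          show "(\<lambda>w. S w / 2) holomorphic_on ball 0 1" using Shol by (intro holomorphic_intros) simp_all
          show "S 0 / 2 = 0" using S0 by simp
          show "cmod (S u / 2) \<le> 1" if "u \<in> ball 0 1" for u
            using tGamma_s[OF Gm[OF that] j w] unfolding S_def by (simp add: norm_divide)
        qed (use that in auto)
        then show ?thesis by (simp add: norm_divide)
      qed
      have "Re (z * (S lam - (\<omega> * q) * cnj (S lam))) < 1 - (cmod q)^2" if z: "cmod z = 1" for z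
      proof -
        define F where "F w = (2 * z * (\<omega> * \<psi> w n) - S w) / (2 - z * S w)" for w
        have den: "2 - z * S w \<noteq> 0" if "w \<in> ball 0 1" for w
        proof
          assume "2 - z * S w = 0"
          then have "z * S w = 2" by simp
          then have "cmod (z * S w) = 2" by simp
          moreover have "cmod (z * S w) = cmod (S w)" using z by (simp only: norm_mult)
          ultimately show False using S2[OF that] by simp
        qed
        have Fhol: "F holomorphic_on ball 0 1"
          unfolding F_def by (intro holomorphic_intros hol nn Shol) (use den in auto)
        have F0: "F 0 = 0" unfolding F_def S0 p0 by simp
        have Fle: "cmod (F w) \<le> 1" if "w \<in> ball 0 1" for w
          using tGamma_F[OF Gm[OF that] j w z] S2[OF that] unfolding F_def S_def by simp
        have "cmod (F lam) < 1" by (rule schwarz_le[OF Fhol F0 Fle lam])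
        then have "cmod (2 * z * (\<omega> * q) - S lam) < cmod (2 - z * S lam)"
          using den[OF lam] unfolding F_def q_def y by (simp add: norm_divide divide_simps)
        then have "(cmod (2 - z * S lam))^2 - (cmod (2 * z * (\<omega> * q) - S lam))^2 > 0"
          using power_strict_mono[of "cmod (2 * z * (\<omega> * q) - S lam)" "cmod (2 - z * S lam)" 2] by simp
        moreover have "cmod (\<omega> * q) = cmod q" using w by (simp add: norm_mult)
        ultimately show ?thesis using ident[OF z, of "S lam" "\<omega> * q"] by simp
      qed
      then have "cmod (S lam - (\<omega> * q) * cnj (S lam)) < 1 - (cmod q)^2" by (rule unit_max)
      moreover have "(y j - q * cnj (y (n-j))) + \<omega> * (y (n-j) - q * cnj (y j)) =
          of_nat (n choose j) * (S lam - (\<omega> * q) * cnj (S lam))"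
      proof -
        have ww: "\<omega> * cnj \<omega> = 1" using w mcnj[of \<omega>] by simp
        have C0: "(of_nat (n choose j) :: complex) \<noteq> 0" using j by auto
        have "of_nat (n choose j) * (S lam - (\<omega> * q) * cnj (S lam)) =
              (y j + \<omega> * y (n-j)) - \<omega> * q * (cnj (y j) + cnj \<omega> * cnj (y (n-j)))"
          unfolding S_def y[symmetric] using C0 by (simp add: field_simps)
        also have "\<dots> = (y j + \<omega> * y (n-j)) - \<omega> * q * cnj (y j) - (\<omega> * cnj \<omega>) * q * cnj (y (n-j))"
          by (simp add: algebra_simps)
        finally show ?thesis unfolding ww by (simp add: algebra_simps)
      qed
      moreover have "real (n choose j) > 0" using j by auto
      ultimately show ?thesis by (simp add: norm_mult)
    qed
    define D where "D = 1 - (cmod q)^2"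
    have Dpos: "D > 0" unfolding D_def using q1 by (simp add: abs_square_less_1)
    define \<beta> where "\<beta> i = (y i - q * cnj (y (n-i))) / of_real D" for i
    show "y \<in> tG n"
      unfolding tG_def
    proof (intro CollectI conjI exI ballI allI impI)
      show "y k = 0" if "k = 0 \<or> n < k" for k using tGamma_zero[OF Gm[OF lam]] that y by simp
      show "y n \<in> ball 0 1" using q1 q_def by simp
      fix j assume j: "j \<in> {1..n-1}"
      have nnj: "n - (n - j) = j" using j by auto
      have qq: "q * cnj q = of_real ((cmod q)^2)" using mcnj[of q] by (simp add: power2_eq_square)
      show "y j = \<beta> j + cnj (\<beta> (n - j)) * y n"
      proof -
        have "(\<beta> j + cnj (\<beta> (n - j)) * q) * of_real D =
              (y j - q * cnj (y (n-j))) + (cnj (y (n-j)) - cnj q * y j) * q"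
          unfolding \<beta>_def nnj using Dpos by (simp add: field_simps)
        also have "\<dots> = y j * of_real D" unfolding D_def using qq by (simp add: algebra_simps)
        finally show ?thesis using Dpos q_def by simp
      qed
      have "cmod (y j - q * cnj (y (n-j))) + cmod (y (n-j) - q * cnj (y j)) < real (n choose j) * D"
        unfolding D_def by (rule sum_max) (rule key[OF j])
      then show "cmod (\<beta> j) + cmod (\<beta> (n - j)) < real (n choose j)"
        unfolding \<beta>_def nnj using Dpos by (simp add: norm_divide divide_simps)
    qed
  qed
  then show "\<exists>\<psi>. analytic_into \<psi> (ball 0 1) n \<and> \<psi> ` ball 0 1 \<subseteq> tG n \<and> \<psi> 0 = (\<lambda>k. 0) \<and> \<psi> l0 = y0"
    using an p0 pl by blast
qed

end
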